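(* Let $R$ be a semiprimary ring of Loewy length $\ell$ with Jacobson radical $\mathscr{J}$. Then $R$ is rigid if and only if, for all $1\le i\le\ell$, $$\{x\in R\mid \mathscr{J}^{\ell-i}x=0\}=\mathscr{J}^i=\{x\in R\mid x\mathscr{J}^{\ell-i}=0\}.$$
   Context: A ring $R$ is semiprimary if its Jacobson radical $\mathscr{J}$ is nilpotent and $R/\mathscr{J}$ is semisimple; its Loewy length $\ell$ is the nilpotency index of $\mathscr{J}$, with $\mathscr{J}^0=R$. A finite-length module is rigid if it has exactly one Loewy filtration (a filtration with semisimple subquotients of minimal length); $R$ is rigid if both the left regular module ${}_RR$ and the right regular module $R_R$ are rigid. *)

theory Defs
  imports Main
begin

text \<open>The ring R is the whole type 'a of class ring_1 (unital, not necessarily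
commutative).  Submodules of the left (right) regular module are the left (right)
ideals.\<close>

definition left_ideal :: "'a::ring_1 set \<Rightarrow> bool" where
  "left_ideal L \<longleftrightarrow> 0 \<in> L \<and> (\<forall>x\<in>L. \<forall>y\<in>L. x - y \<in> L) \<and> (\<forall>r x. x \<in> L \<longrightarrow> r * x \<in> L)"

definition right_ideal :: "'a::ring_1 set \<Rightarrow> bool" where
  "right_ideal L \<longleftrightarrow> 0 \<in> L \<and> (\<forall>x\<in>L. \<forall>y\<in>L. x - y \<in> L) \<and> (\<forall>r x. x \<in> L \<longrightarrow> x * r \<in> L)"

definition maximal_left_ideal :: "'a::ring_1 set \<Rightarrow> bool" where
  "maximal_left_ideal L \<longleftrightarrow> left_ideal L \<and> L \<noteq> UNIV \<and>
     (\<forall>L'. left_ideal L' \<and> L \<subseteq> L' \<longrightarrow> L' = L \<or> L' = UNIV)"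

definition jrad :: "'a::ring_1 set" where
  "jrad = \<Inter>{L. maximal_left_ideal L}"

inductive_set set_mult :: "'a::ring_1 set \<Rightarrow> 'a set \<Rightarrow> 'a set" for A B where
  prod: "a \<in> A \<Longrightarrow> b \<in> B \<Longrightarrow> a * b \<in> set_mult A B"
| zero: "0 \<in> set_mult A B"
| diff: "x \<in> set_mult A B \<Longrightarrow> y \<in> set_mult A B \<Longrightarrow> x - y \<in> set_mult A B"

primrec set_pow :: "'a::ring_1 set \<Rightarrow> nat \<Rightarrow> 'a set" where
  "set_pow A 0 = UNIV"
| "set_pow A (Suc n) = set_mult A (set_pow A n)"

definition set_plus :: "'a::ring_1 set \<Rightarrow> 'a set \<Rightarrow> 'a set" where
  "set_plus K K' = {x + y | x y. x \<in> K \<and> y \<in> K'}"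

text \<open>For submodules A \<subseteq> B (w.r.t. the submodule predicate P), the subquotient B/A
is semisimple: every submodule of B/A (i.e. every K with A \<subseteq> K \<subseteq> B) is a direct
summand.\<close>
definition ss_subquot :: "('a::ring_1 set \<Rightarrow> bool) \<Rightarrow> 'a set \<Rightarrow> 'a set \<Rightarrow> bool" where
  "ss_subquot P A B \<longleftrightarrow> A \<subseteq> B \<and>
     (\<forall>K. P K \<and> A \<subseteq> K \<and> K \<subseteq> B \<longrightarrow>
        (\<exists>K'. P K' \<and> A \<subseteq> K' \<and> K' \<subseteq> B \<and> set_plus K K' = B \<and> K \<inter> K' = A))"

definition semiprimary :: "'a::ring_1 itself \<Rightarrow> bool" where
  "semiprimary _ \<longleftrightarrow> (\<exists>n. set_pow (jrad::'a set) n = {0}) \<and> ss_subquot left_ideal (jrad::'a set) UNIV"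

definition loewy_length :: "'a::ring_1 itself \<Rightarrow> nat" where
  "loewy_length _ = (LEAST n. set_pow (jrad::'a set) n = {0})"

text \<open>A filtration 0 = F_0 \<subseteq> ... \<subseteq> F_n = R of the regular module (list of length n+1)
with semisimple subquotients; a Loewy filtration is one of minimal length.\<close>
definition ss_filtration :: "('a::ring_1 set \<Rightarrow> bool) \<Rightarrow> 'a set list \<Rightarrow> bool" where
  "ss_filtration P Fs \<longleftrightarrow> Fs \<noteq> [] \<and> hd Fs = {0} \<and> last Fs = UNIV \<and> (\<forall>X\<in>set Fs. P X) \<and>
     (\<forall>k. Suc k < length Fs \<longrightarrow> Fs ! k \<subseteq> Fs ! Suc k \<and> ss_subquot P (Fs ! k) (Fs ! Suc k))"

definition loewy_filtration :: "('a::ring_1 set \<Rightarrow> bool) \<Rightarrow> 'a set list \<Rightarrow> bool" where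
  "loewy_filtration P Fs \<longleftrightarrow> ss_filtration P Fs \<and>
     (\<forall>Gs. ss_filtration P Gs \<longrightarrow> length Fs \<le> length Gs)"

definition rigid_regular :: "('a::ring_1 set \<Rightarrow> bool) \<Rightarrow> bool" where
  "rigid_regular P \<longleftrightarrow> (\<exists>!Fs. loewy_filtration P Fs)"

definition rigid_ring :: "'a::ring_1 itself \<Rightarrow> bool" where
  "rigid_ring _ \<longleftrightarrow> rigid_regular (left_ideal :: 'a set \<Rightarrow> bool) \<and> rigid_regular (right_ideal :: 'a set \<Rightarrow> bool)"

end

theory Submission
  imports Defs
begin

lemma li_0: "left_ideal L \<Longrightarrow> 0 \<in> L" by (simp add: left_ideal_def)
lemma li_diff: "left_ideal L \<Longrightarrow> x \<in> L \<Longrightarrow> y \<in> L \<Longrightarrow> x - y \<in> L" by (simp add: left_ideal_def)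
lemma li_mult: "left_ideal L \<Longrightarrow> x \<in> L \<Longrightarrow> r * x \<in> L" by (simp add: left_ideal_def)
lemma li_uminus: "left_ideal L \<Longrightarrow> x \<in> L \<Longrightarrow> - x \<in> L"
  using li_diff[of L 0 x] li_0 by force
lemma li_add: "left_ideal L \<Longrightarrow> x \<in> L \<Longrightarrow> y \<in> L \<Longrightarrow> x + y \<in> L"
  using li_diff[of L x "- y"] li_uminus by force

lemma ri_0: "right_ideal L \<Longrightarrow> 0 \<in> L" by (simp add: right_ideal_def)
lemma ri_diff: "right_ideal L \<Longrightarrow> x \<in> L \<Longrightarrow> y \<in> L \<Longrightarrow> x - y \<in> L" by (simp add: right_ideal_def)
lemma ri_mult: "right_ideal L \<Longrightarrow> x \<in> L \<Longrightarrow> x * r \<in> L" by (simp add: right_ideal_def)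
lemma ri_uminus: "right_ideal L \<Longrightarrow> x \<in> L \<Longrightarrow> - x \<in> L"
  using ri_diff[of L 0 x] ri_0 by force
lemma ri_add: "right_ideal L \<Longrightarrow> x \<in> L \<Longrightarrow> y \<in> L \<Longrightarrow> x + y \<in> L"
  using ri_diff[of L x "- y"] ri_uminus by force

lemma left_ideal_UNIV: "left_ideal UNIV" by (simp add: left_ideal_def)
lemma right_ideal_UNIV: "right_ideal UNIV" by (simp add: right_ideal_def)

lemma left_ideal_Inter: "(\<And>L. L \<in> S \<Longrightarrow> left_ideal L) \<Longrightarrow> left_ideal (\<Inter>S)"
  by (auto simp: left_ideal_def)

lemma jrad_left: "left_ideal (jrad :: 'a::ring_1 set)"
  unfolding jrad_def by (rule left_ideal_Inter) (auto simp: maximal_left_ideal_def)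

lemma li_one: "left_ideal L \<Longrightarrow> 1 \<in> L \<Longrightarrow> L = UNIV"
  using li_mult[of L 1] by force

lemma ri_one: "right_ideal L \<Longrightarrow> 1 \<in> L \<Longrightarrow> L = UNIV"
  using ri_mult[of L 1] by force

lemma sm_add: "x \<in> set_mult A B \<Longrightarrow> y \<in> set_mult A B \<Longrightarrow> x + y \<in> set_mult A B"
proof -
  assume a: "x \<in> set_mult A B" "y \<in> set_mult A B"
  have "0 - y \<in> set_mult A B" using a set_mult.diff set_mult.zero by blast
  then have "x - (0 - y) \<in> set_mult A B" using a set_mult.diff by blast
  then show ?thesis by simp
qed

lemma sm_subset:
  assumes "\<And>a b. a \<in> A \<Longrightarrow> b \<in> B \<Longrightarrow> a * b \<in> C" "0 \<in> C" "\<And>x y. x \<in> C \<Longrightarrow> y \<in> C \<Longrightarrow> x - y \<in> C"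
  shows "set_mult A B \<subseteq> C"
proof
  fix x assume "x \<in> set_mult A B" then show "x \<in> C"
    by (induction rule: set_mult.induct) (use assms in auto)
qed

lemma sm_left:
  assumes "\<And>r a. a \<in> A \<Longrightarrow> r * a \<in> A"
  shows "left_ideal (set_mult A B)"
  unfolding left_ideal_def
proof (intro conjI ballI allI impI)
  fix r x assume "x \<in> set_mult A B" then show "r * x \<in> set_mult A B"
  proof (induction rule: set_mult.induct)
    case (prod a b) then show ?case using assms set_mult.prod[of "r*a" A b B] by (simp add: mult.assoc)
  next
    case zero then show ?case by (simp add: set_mult.zero)
  next
    case (diff x y) then show ?case by (simp add: right_diff_distrib set_mult.diff)
  qed
qed (auto intro: set_mult.intros)

lemma sm_right:
  assumes "\<And>r b. b \<in> B \<Longrightarrow> b * r \<in> B"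
  shows "right_ideal (set_mult A B)"
  unfolding right_ideal_def
proof (intro conjI ballI allI impI)
  fix r x assume "x \<in> set_mult A B" then show "x * r \<in> set_mult A B"
  proof (induction rule: set_mult.induct)
    case (prod a b) then show ?case using assms set_mult.prod[of a A "b*r" B] by (simp add: mult.assoc)
  next
    case zero then show ?case by (simp add: set_mult.zero)
  next
    case (diff x y) then show ?case by (simp add: left_diff_distrib set_mult.diff)
  qed
qed (auto intro: set_mult.intros)

lemma sm_mono: "A \<subseteq> A' \<Longrightarrow> B \<subseteq> B' \<Longrightarrow> set_mult A B \<subseteq> set_mult A' B'"
  by (rule sm_subset) (auto intro: set_mult.intros)

lemma sm_assoc1: "set_mult A (set_mult B C) \<subseteq> set_mult (set_mult A B) C"
proof (rule sm_subset)
  fix a y assume a: "a \<in> A" and y: "y \<in> set_mult B C"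
  from y show "a * y \<in> set_mult (set_mult A B) C"
  proof (induction rule: set_mult.induct)
    case (prod b c) then show ?case
      by (metis a mult.assoc set_mult.prod)
  next
    case zero then show ?case by (simp add: set_mult.zero)
  next
    case (diff x y) then show ?case by (simp add: right_diff_distrib set_mult.diff)
  qed
qed (auto intro: set_mult.intros)

lemma sm_assoc2: "set_mult (set_mult A B) C \<subseteq> set_mult A (set_mult B C)"
proof (rule sm_subset)
  fix y c assume y: "y \<in> set_mult A B" and c: "c \<in> C"
  from y show "y * c \<in> set_mult A (set_mult B C)"
  proof (induction rule: set_mult.induct)
    case (prod a b) then show ?case
      by (metis c mult.assoc set_mult.prod)
  next
    case zero then show ?case by (simp add: set_mult.zero)
  next
    case (diff x y) then show ?case by (simp add: left_diff_distrib set_mult.diff)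
  qed
qed (auto intro: set_mult.intros)

lemma sm_zero_left: "set_mult {0} B = {0}"
proof
  show "set_mult {0} B \<subseteq> {0}" by (rule sm_subset) auto
qed (auto intro: set_mult.intros)

lemma sp_left: "left_ideal J \<Longrightarrow> left_ideal (set_pow J k)"
  by (induction k) (auto simp: left_ideal_UNIV intro!: sm_left li_mult)

lemma sp_right: "right_ideal (set_pow J k)"
  by (induction k) (auto simp: right_ideal_UNIV intro!: sm_right ri_mult)

lemma sp_0: "0 \<in> set_pow J k"
  by (cases k) (auto intro: set_mult.zero)

lemma sp_Suc_in: "j \<in> J \<Longrightarrow> x \<in> set_pow J k \<Longrightarrow> j * x \<in> set_pow J (Suc k)"
  by (simp add: set_mult.prod)

lemma sp_Suc_sub: "set_pow J (Suc k) \<subseteq> set_pow J k"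
  by (induction k) (auto intro: sm_mono[THEN subsetD])

lemma sp_anti: "k \<le> m \<Longrightarrow> set_pow J m \<subseteq> set_pow J k"
proof (induction m)
  case 0 then show ?case by simp
next
  case (Suc m) then show ?case using sp_Suc_sub[of J m] by (cases "k = Suc m") auto
qed

lemma sp_nil: "set_pow J n = {0} \<Longrightarrow> n \<le> m \<Longrightarrow> set_pow J m = {0}"
  using sp_anti[of n m J] sp_0[of J m] by auto

lemma sp_power: "c \<in> J \<Longrightarrow> c ^ k \<in> set_pow J k"
  by (induction k) (auto intro: set_mult.prod)

lemma sp_prod_zero: "set_pow J n = {0} \<Longrightarrow> c \<in> J \<Longrightarrow> c ^ n = 0"
  using sp_power[of c J n] by auto

lemma geo_sum: "(\<Sum>k<m. a^k) * (1 - a) = (1::'a::ring_1) - a ^ m"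
proof (induction m)
  case 0 then show ?case by simp
next
  case (Suc m)
  have "(\<Sum>k<Suc m. a^k) * (1 - a) = (\<Sum>k<m. a^k) * (1 - a) + a^m * (1 - a)"
    by (simp add: distrib_right)
  also have "\<dots> = 1 - a ^ Suc m" using Suc by (simp add: algebra_simps power_Suc2 power_commutes)
  finally show ?case .
qed

lemma jrad_right:
  assumes nil: "set_pow (jrad :: 'a::ring_1 set) n = {0}"
  shows "right_ideal (jrad :: 'a set)"
proof -
  have jl: "left_ideal (jrad :: 'a set)" by (rule jrad_left)
  have "x * r \<in> jrad" if x: "x \<in> (jrad :: 'a set)" for x r
  proof -
    have "x * r \<in> L" if L: "maximal_left_ideal L" for L
    proof (rule ccontr)
      assume nin: "x * r \<notin> L"
      have Ll: "left_ideal L" and LU: "L \<noteq> UNIV" and Lm: "\<And>L'. left_ideal L' \<Longrightarrow> L \<subseteq> L' \<Longrightarrow> L' = L \<or> L' = UNIV"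
        using L by (auto simp: maximal_left_ideal_def)
      define L2 where "L2 = {l + s * (x * r) | l s. l \<in> L}"
      have "left_ideal L2" unfolding left_ideal_def L2_def
      proof (intro conjI ballI allI impI)
        show "0 \<in> {l + s * (x * r) | l s. l \<in> L}" using li_0[OF Ll] by (metis (mono_tags, lifting) add.right_neutral mem_Collect_eq mult_zero_left)
      next
        fix a b assume "a \<in> {l + s * (x * r) | l s. l \<in> L}" "b \<in> {l + s * (x * r) | l s. l \<in> L}"
        then obtain l1 s1 l2 s2 where "a = l1 + s1 * (x*r)" "b = l2 + s2*(x*r)" "l1 \<in> L" "l2 \<in> L" by auto
        then show "a - b \<in> {l + s * (x * r) | l s. l \<in> L}"
          by (intro CollectI exI[of _ "l1 - l2"] exI[of _ "s1 - s2"]) (auto simp: algebra_simps li_diff[OF Ll])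
      next
        fix t a assume "a \<in> {l + s * (x * r) | l s. l \<in> L}"
        then obtain l1 s1 where "a = l1 + s1 * (x*r)" "l1 \<in> L" by auto
        then show "t * a \<in> {l + s * (x * r) | l s. l \<in> L}"
          by (intro CollectI exI[of _ "t * l1"] exI[of _ "t * s1"]) (auto simp: algebra_simps li_mult[OF Ll])
      qed
      moreover have "L \<subseteq> L2" unfolding L2_def by (force intro: exI[of _ 0])
      moreover have "x * r \<in> L2" unfolding L2_def using li_0[OF Ll] by (force intro: exI[of _ 1])
      ultimately have "L2 = UNIV" using Lm nin by blast
      then obtain l y where l: "l \<in> L" and one: "1 = l + y * (x * r)" unfolding L2_def by blast
      define a where "a = y * x * r"
      define c where "c = r * y * x"
      have cJ: "c \<in> jrad" unfolding c_def using li_mult[OF jl x, of "r*y"] by (simp add: mult.assoc)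
      have ak: "a ^ Suc k = y * x * c ^ k * r" for k
      proof (induction k)
        case 0 then show ?case by (simp add: a_def)
      next
        case (Suc k)
        have "a ^ Suc (Suc k) = a * a ^ Suc k" by simp
        also have "\<dots> = y * x * (r * y * x * c ^ k) * r" using Suc by (simp add: a_def mult.assoc)
        also have "\<dots> = y * x * c ^ Suc k * r" by (simp add: c_def mult.assoc)
        finally show ?case .
      qed
      have "a ^ Suc n = 0" using ak[of n] sp_prod_zero[OF nil cJ] by simp
      then have "(\<Sum>k<Suc n. a^k) * (1 - a) = 1" using geo_sum[where m="Suc n" and a=a] by simp
      moreover have "1 - a = l" using one by (simp add: a_def algebra_simps mult.assoc)
      ultimately have "1 \<in> L" using li_mult[OF Ll l] by metis
      then show False using li_one[OF Ll] LU by blast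
    qed
    then show ?thesis unfolding jrad_def by blast
  qed
  then show ?thesis using jl unfolding right_ideal_def left_ideal_def by blast
qed

lemma sp_one: "left_ideal J \<Longrightarrow> right_ideal J \<Longrightarrow> set_pow J 1 = J"
proof
  assume JL: "left_ideal J" and JR: "right_ideal J"
  have "set_mult J UNIV \<subseteq> J" by (rule sm_subset) (auto simp: ri_mult[OF JR] ri_0[OF JR] ri_diff[OF JR])
  then show "set_pow J 1 \<subseteq> J" by simp
next
  show "J \<subseteq> set_pow J 1" using set_mult.prod[of _ J 1 UNIV] by force
qed

lemma sp_sub_J: "left_ideal J \<Longrightarrow> right_ideal J \<Longrightarrow> 1 \<le> k \<Longrightarrow> set_pow J k \<subseteq> J"
  using sp_anti[of 1 k J] sp_one[of J] by auto

lemma sp_Suc_right: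
  assumes JL: "left_ideal J"
  shows "x \<in> set_pow J k \<Longrightarrow> j \<in> J \<Longrightarrow> x * j \<in> set_pow J (Suc k)"
proof (induction k arbitrary: x)
  case 0
  then have "x * j \<in> J" using li_mult[OF JL] by blast
  then show ?case using set_mult.prod[of "x*j" J 1 UNIV] by simp
next
  case (Suc k)
  from Suc.prems(1) have "x \<in> set_mult J (set_pow J k)" by simp
  then show ?case unfolding set_pow.simps(2)
  proof (induction rule: set_mult.induct)
    case (prod a b) then show ?case using Suc.IH[of b] Suc.prems(2) set_mult.prod[of a J "b*j"] by (simp add: mult.assoc)
  next
    case zero then show ?case by (simp add: set_mult.zero)
  next
    case (diff x y) then show ?case by (simp add: left_diff_distrib set_mult.diff)
  qed
qed

lemma sp_Suc_alt:
  assumes JL: "left_ideal J" and JR: "right_ideal J"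
  shows "set_pow J (Suc k) \<subseteq> set_mult (set_pow J k) J"
proof (induction k)
  case 0
  have "set_pow J 1 = J" using sp_one[OF JL JR] .
  moreover have "J \<subseteq> set_mult (set_pow J 0) J" using set_mult.prod[of 1 UNIV _ J] by force
  ultimately show ?case by simp
next
  case (Suc k)
  have "set_pow J (Suc (Suc k)) = set_mult J (set_pow J (Suc k))" by simp
  also have "\<dots> \<subseteq> set_mult J (set_mult (set_pow J k) J)" using Suc by (rule sm_mono[OF order_refl])
  also have "\<dots> \<subseteq> set_mult (set_mult J (set_pow J k)) J" by (rule sm_assoc1)
  finally show ?case by simp
qed

lemma splus_left:
  assumes X: "left_ideal X" and Y: "left_ideal Y" shows "left_ideal (set_plus X Y)"
  unfolding left_ideal_def
proof (intro conjI ballI allI impI)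
  show "0 \<in> set_plus X Y" unfolding set_plus_def using li_0[OF X] li_0[OF Y] by force
next
  fix a b assume "a \<in> set_plus X Y" "b \<in> set_plus X Y"
  then obtain x1 y1 x2 y2 where e: "a = x1 + y1" "b = x2 + y2" and m: "x1 \<in> X" "x2 \<in> X" "y1 \<in> Y" "y2 \<in> Y"
    unfolding set_plus_def by blast
  have "a - b = (x1 - x2) + (y1 - y2)" using e by (simp add: algebra_simps)
  then show "a - b \<in> set_plus X Y" unfolding set_plus_def using li_diff[OF X m(1,2)] li_diff[OF Y m(3,4)] by blast
next
  fix r a assume "a \<in> set_plus X Y"
  then obtain x1 y1 where e: "a = x1 + y1" and m: "x1 \<in> X" "y1 \<in> Y" unfolding set_plus_def by blast
  have "r * a = r * x1 + r * y1" using e by (simp add: algebra_simps)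
  then show "r * a \<in> set_plus X Y" unfolding set_plus_def using li_mult[OF X m(1)] li_mult[OF Y m(2)] by blast
qed

lemma splus_right:
  assumes X: "right_ideal X" and Y: "right_ideal Y" shows "right_ideal (set_plus X Y)"
  unfolding right_ideal_def
proof (intro conjI ballI allI impI)
  show "0 \<in> set_plus X Y" unfolding set_plus_def using ri_0[OF X] ri_0[OF Y] by force
next
  fix a b assume "a \<in> set_plus X Y" "b \<in> set_plus X Y"
  then obtain x1 y1 x2 y2 where e: "a = x1 + y1" "b = x2 + y2" and m: "x1 \<in> X" "x2 \<in> X" "y1 \<in> Y" "y2 \<in> Y"
    unfolding set_plus_def by blast
  have "a - b = (x1 - x2) + (y1 - y2)" using e by (simp add: algebra_simps)
  then show "a - b \<in> set_plus X Y" unfolding set_plus_def using ri_diff[OF X m(1,2)] ri_diff[OF Y m(3,4)] by blast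
next
  fix r a assume "a \<in> set_plus X Y"
  then obtain x1 y1 where e: "a = x1 + y1" and m: "x1 \<in> X" "y1 \<in> Y" unfolding set_plus_def by blast
  have "a * r = x1 * r + y1 * r" using e by (simp add: algebra_simps)
  then show "a * r \<in> set_plus X Y" unfolding set_plus_def using ri_mult[OF X m(1)] ri_mult[OF Y m(2)] by blast
qed

section \<open>Semisimple subquotients are annihilated by J\<close>

lemma factA_left:
  assumes JL: "left_ideal J" and JR: "right_ideal J" and nil: "set_pow J n = {0}"
    and A: "left_ideal A" and B: "left_ideal B" and ss: "ss_subquot left_ideal A B"
    and j: "j \<in> J" and b: "b \<in> B"
  shows "j * b \<in> A"
proof -
  define X where "X = set_plus (set_mult J B) A"
  have JB: "left_ideal (set_mult J B)" using sm_left li_mult[OF JL] by blast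
  have XL: "left_ideal X" unfolding X_def by (rule splus_left[OF JB A])
  have JBsub: "set_mult J B \<subseteq> B" by (rule sm_subset) (auto simp: li_mult[OF B] li_0[OF B] li_diff[OF B])
  have AB: "A \<subseteq> B" using ss by (simp add: ss_subquot_def)
  have AX: "A \<subseteq> X" unfolding X_def set_plus_def using li_0[OF JB] by force
  have JBX: "set_mult J B \<subseteq> X" unfolding X_def set_plus_def using li_0[OF A] by force
  have XB: "X \<subseteq> B" unfolding X_def set_plus_def using JBsub AB li_add[OF B] by blast
  obtain K where K: "left_ideal K" "A \<subseteq> K" "K \<subseteq> B" "set_plus X K = B" "X \<inter> K = A"
    using ss XL AX XB unfolding ss_subquot_def by blast
  have step: "\<forall>q\<in>set_pow J k. \<forall>b\<in>B. q*b \<in> A"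
    if k1: "1 \<le> k" and IH: "\<forall>q\<in>set_pow J (Suc k). \<forall>b\<in>B. q*b \<in> A" for k
  proof (intro ballI)
    fix q b assume q: "q \<in> set_pow J k" and b: "b \<in> B"
    have qJ: "q \<in> J" using sp_sub_J[OF JL JR k1] q by blast
    from b obtain x c where bxc: "b = x + c" "x \<in> X" "c \<in> K" using K(4) unfolding set_plus_def by blast
    from bxc(2) obtain s a where xsa: "x = s + a" "s \<in> set_mult J B" "a \<in> A" unfolding X_def set_plus_def by blast
    have "q*c \<in> K" using li_mult[OF K(1) bxc(3)] .
    moreover have "q*c \<in> X" using set_mult.prod[OF qJ, of c B] K(3) bxc(3) JBX by blast
    ultimately have qc: "q*c \<in> A" using K(5) by blast
    have qa: "q*a \<in> A" using li_mult[OF A xsa(3)] .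
    from xsa(2) have qs: "q*s \<in> A"
    proof (induction rule: set_mult.induct)
      case (prod j' b')
      have "q*j' \<in> set_pow J (Suc k)" using sp_Suc_right[OF JL q prod(1)] .
      then show ?case using IH prod(2) by (simp add: mult.assoc[symmetric])
    next
      case zero then show ?case by (simp add: li_0[OF A])
    next
      case (diff x y) then show ?case by (simp add: right_diff_distrib li_diff[OF A])
    qed
    have "q*b = q*s + q*a + q*c" using bxc(1) xsa(1) by (simp add: algebra_simps)
    then show "q*b \<in> A" using qs qa qc li_add[OF A] by metis
  qed
  have D: "\<And>k. n - k = d \<Longrightarrow> 1 \<le> k \<Longrightarrow> \<forall>q\<in>set_pow J k. \<forall>b\<in>B. q*b \<in> A" for d
  proof (induction d)
    case 0
    then have "set_pow J k = {0}" using sp_nil[OF nil] by simp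
    then show ?case using li_0[OF A] by simp
  next
    case (Suc d)
    then have "n - Suc k = d" by simp
    then have "\<forall>q\<in>set_pow J (Suc k). \<forall>b\<in>B. q*b \<in> A" using Suc.IH by simp
    then show ?case using step Suc.prems(2) by blast
  qed
  show ?thesis using D[of 1 "n - 1"] sp_one[OF JL JR] j b by simp
qed

lemma factA_right:
  assumes JL: "left_ideal J" and JR: "right_ideal J" and nil: "set_pow J n = {0}"
    and A: "right_ideal A" and B: "right_ideal B" and ss: "ss_subquot right_ideal A B"
    and j: "j \<in> J" and b: "b \<in> B"
  shows "b * j \<in> A"
proof -
  define X where "X = set_plus (set_mult B J) A"
  have JB: "right_ideal (set_mult B J)" using sm_right ri_mult[OF JR] by blast
  have XL: "right_ideal X" unfolding X_def by (rule splus_right[OF JB A])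
  have JBsub: "set_mult B J \<subseteq> B" by (rule sm_subset) (auto simp: ri_mult[OF B] ri_0[OF B] ri_diff[OF B])
  have AB: "A \<subseteq> B" using ss by (simp add: ss_subquot_def)
  have AX: "A \<subseteq> X" unfolding X_def set_plus_def using ri_0[OF JB] by force
  have JBX: "set_mult B J \<subseteq> X" unfolding X_def set_plus_def using ri_0[OF A] by force
  have XB: "X \<subseteq> B" unfolding X_def set_plus_def using JBsub AB ri_add[OF B] by blast
  obtain K where K: "right_ideal K" "A \<subseteq> K" "K \<subseteq> B" "set_plus X K = B" "X \<inter> K = A"
    using ss XL AX XB unfolding ss_subquot_def by blast
  have step: "\<forall>q\<in>set_pow J k. \<forall>b\<in>B. b*q \<in> A"
    if k1: "1 \<le> k" and IH: "\<forall>q\<in>set_pow J (Suc k). \<forall>b\<in>B. b*q \<in> A" for k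
  proof (intro ballI)
    fix q b assume q: "q \<in> set_pow J k" and b: "b \<in> B"
    have qJ: "q \<in> J" using sp_sub_J[OF JL JR k1] q by blast
    from b obtain x c where bxc: "b = x + c" "x \<in> X" "c \<in> K" using K(4) unfolding set_plus_def by blast
    from bxc(2) obtain s a where xsa: "x = s + a" "s \<in> set_mult B J" "a \<in> A" unfolding X_def set_plus_def by blast
    have "c*q \<in> K" using ri_mult[OF K(1) bxc(3)] .
    moreover have "c*q \<in> X" using set_mult.prod[of c B q J] qJ K(3) bxc(3) JBX by blast
    ultimately have qc: "c*q \<in> A" using K(5) by blast
    have qa: "a*q \<in> A" using ri_mult[OF A xsa(3)] .
    from xsa(2) have qs: "s*q \<in> A"
    proof (induction rule: set_mult.induct)
      case (prod b' j')
      have "j'*q \<in> set_pow J (Suc k)" using sp_Suc_in[OF prod(2) q] .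
      then show ?case using IH prod(1) by (simp add: mult.assoc)
    next
      case zero then show ?case by (simp add: ri_0[OF A])
    next
      case (diff x y) then show ?case by (simp add: left_diff_distrib ri_diff[OF A])
    qed
    have "b*q = s*q + a*q + c*q" using bxc(1) xsa(1) by (simp add: algebra_simps)
    then show "b*q \<in> A" using qs qa qc ri_add[OF A] by metis
  qed
  have D: "\<And>k. n - k = d \<Longrightarrow> 1 \<le> k \<Longrightarrow> \<forall>q\<in>set_pow J k. \<forall>b\<in>B. b*q \<in> A" for d
  proof (induction d)
    case 0
    then have "set_pow J k = {0}" using sp_nil[OF nil] by simp
    then show ?case using ri_0[OF A] by simp
  next
    case (Suc d)
    then have "n - Suc k = d" by simp
    then have "\<forall>q\<in>set_pow J (Suc k). \<forall>b\<in>B. b*q \<in> A" using Suc.IH by simp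
    then show ?case using step Suc.prems(2) by blast
  qed
  show ?thesis using D[of 1 "n - 1"] sp_one[OF JL JR] j b by simp
qed

section \<open>Modules annihilated by J are semisimple\<close>

lemma ext_left:
  assumes K: "left_ideal K"
  shows "left_ideal {k + r * z | k r. k \<in> K}"
  unfolding left_ideal_def
proof (intro conjI ballI allI impI)
  show "0 \<in> {k + r * z | k r. k \<in> K}" using li_0[OF K] by (intro CollectI exI[of _ 0] exI[of _ 0]) simp
next
  fix a b assume "a \<in> {k + r * z | k r. k \<in> K}" "b \<in> {k + r * z | k r. k \<in> K}"
  then obtain k1 r1 k2 r2 where e: "a = k1 + r1 * z" "b = k2 + r2 * z" "k1 \<in> K" "k2 \<in> K" by blast
  have "a - b = (k1 - k2) + (r1 - r2) * z" using e by (simp add: algebra_simps)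
  then show "a - b \<in> {k + r * z | k r. k \<in> K}" using li_diff[OF K e(3,4)] by blast
next
  fix t a assume "a \<in> {k + r * z | k r. k \<in> K}"
  then obtain k1 r1 where e: "a = k1 + r1 * z" "k1 \<in> K" by blast
  have "t * a = t * k1 + (t * r1) * z" using e by (simp add: algebra_simps)
  then show "t * a \<in> {k + r * z | k r. k \<in> K}" using li_mult[OF K e(2)] by blast
qed

lemma ext_right:
  assumes K: "right_ideal K"
  shows "right_ideal {k + z * r | k r. k \<in> K}"
  unfolding right_ideal_def
proof (intro conjI ballI allI impI)
  show "0 \<in> {k + z * r | k r. k \<in> K}" using ri_0[OF K] by (intro CollectI exI[of _ 0] exI[of _ 0]) simp
next
  fix a b assume "a \<in> {k + z * r | k r. k \<in> K}" "b \<in> {k + z * r | k r. k \<in> K}"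
  then obtain k1 r1 k2 r2 where e: "a = k1 + z * r1" "b = k2 + z * r2" "k1 \<in> K" "k2 \<in> K" by blast
  have "a - b = (k1 - k2) + z * (r1 - r2)" using e by (simp add: algebra_simps)
  then show "a - b \<in> {k + z * r | k r. k \<in> K}" using ri_diff[OF K e(3,4)] by blast
next
  fix t a assume "a \<in> {k + z * r | k r. k \<in> K}"
  then obtain k1 r1 where e: "a = k1 + z * r1" "k1 \<in> K" by blast
  have "a * t = k1 * t + z * (r1 * t)" using e by (simp add: algebra_simps)
  then show "a * t \<in> {k + z * r | k r. k \<in> K}" using ri_mult[OF K e(2)] by blast
qed

lemma chain_left:
  assumes "C \<noteq> {}" "\<And>K. K \<in> C \<Longrightarrow> left_ideal K" "\<And>X Y. X \<in> C \<Longrightarrow> Y \<in> C \<Longrightarrow> X \<subseteq> Y \<or> Y \<subseteq> X"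
  shows "left_ideal (\<Union>C)"
  unfolding left_ideal_def
proof (intro conjI ballI allI impI)
  show "0 \<in> \<Union>C" using assms(1,2) li_0 by blast
next
  fix x y assume "x \<in> \<Union>C" "y \<in> \<Union>C"
  then obtain X Y where "X \<in> C" "Y \<in> C" "x \<in> X" "y \<in> Y" by blast
  then show "x - y \<in> \<Union>C" using assms(2) assms(3)[of X Y] li_diff by blast
next
  fix r x assume "x \<in> \<Union>C" then show "r * x \<in> \<Union>C" using assms(2) li_mult by blast
qed

lemma chain_right:
  assumes "C \<noteq> {}" "\<And>K. K \<in> C \<Longrightarrow> right_ideal K" "\<And>X Y. X \<in> C \<Longrightarrow> Y \<in> C \<Longrightarrow> X \<subseteq> Y \<or> Y \<subseteq> X"
  shows "right_ideal (\<Union>C)"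
  unfolding right_ideal_def
proof (intro conjI ballI allI impI)
  show "0 \<in> \<Union>C" using assms(1,2) ri_0 by blast
next
  fix x y assume "x \<in> \<Union>C" "y \<in> \<Union>C"
  then obtain X Y where "X \<in> C" "Y \<in> C" "x \<in> X" "y \<in> Y" by blast
  then show "x - y \<in> \<Union>C" using assms(2) assms(3)[of X Y] ri_diff by blast
next
  fix r x assume "x \<in> \<Union>C" then show "x * r \<in> \<Union>C" using assms(2) ri_mult by blast
qed

lemma factB_left:
  assumes lss: "\<And>I. left_ideal I \<Longrightarrow> J \<subseteq> I \<Longrightarrow> \<exists>I'. left_ideal I' \<and> J \<subseteq> I' \<and> 1 \<in> set_plus I I' \<and> I \<inter> I' \<subseteq> J"
    and A: "left_ideal A" and B: "left_ideal B" and AB: "A \<subseteq> B"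
    and ann: "\<And>j b. j \<in> J \<Longrightarrow> b \<in> B \<Longrightarrow> j * b \<in> A"
  shows "ss_subquot left_ideal A B"
  unfolding ss_subquot_def
proof (intro conjI allI impI)
  show "A \<subseteq> B" by fact
  fix N assume "left_ideal N \<and> A \<subseteq> N \<and> N \<subseteq> B"
  then have N: "left_ideal N" "A \<subseteq> N" "N \<subseteq> B" by auto
  define S where "S = {K. left_ideal K \<and> A \<subseteq> K \<and> K \<subseteq> B \<and> N \<inter> K = A}"
  have "\<exists>M\<in>S. \<forall>X\<in>S. M \<subseteq> X \<longrightarrow> X = M"
  proof (rule subset_Zorn_nonempty)
    show "S \<noteq> {}" using A AB N(2) unfolding S_def by blast
  next
    fix C assume C: "C \<noteq> {}" "subset.chain S C"
    then have CS: "C \<subseteq> S" and Cc: "\<And>X Y. X \<in> C \<Longrightarrow> Y \<in> C \<Longrightarrow> X \<subseteq> Y \<or> Y \<subseteq> X"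
      by (auto simp: subset_chain_def)
    have "left_ideal (\<Union>C)" using chain_left[OF C(1) _ Cc] CS unfolding S_def by blast
    then show "\<Union>C \<in> S" using CS C(1) unfolding S_def by blast
  qed
  then obtain K where KS: "K \<in> S" and Kmax: "\<And>X. X \<in> S \<Longrightarrow> K \<subseteq> X \<Longrightarrow> X = K" by blast
  have K: "left_ideal K" "A \<subseteq> K" "K \<subseteq> B" "N \<inter> K = A" using KS unfolding S_def by auto
  define NK where "NK = set_plus N K"
  have NKL: "left_ideal NK" unfolding NK_def by (rule splus_left[OF N(1) K(1)])
  have KNK: "K \<subseteq> NK" unfolding NK_def set_plus_def using li_0[OF N(1)] by force
  have NNK: "N \<subseteq> NK" unfolding NK_def set_plus_def using li_0[OF K(1)] by force
  have NKB: "NK \<subseteq> B" unfolding NK_def set_plus_def using N(3) K(3) li_add[OF B] by blast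
  have "B \<subseteq> NK"
  proof
    fix m assume m: "m \<in> B"
    define I where "I = {r. r * m \<in> NK}"
    have IL: "left_ideal I" unfolding left_ideal_def I_def
      using li_0[OF NKL] li_diff[OF NKL] li_mult[OF NKL] by (auto simp: left_diff_distrib mult.assoc)
    have JI: "J \<subseteq> I" unfolding I_def using ann[OF _ m] K(2) KNK by blast
    obtain I' where I': "left_ideal I'" "J \<subseteq> I'" "1 \<in> set_plus I I'" "I \<inter> I' \<subseteq> J"
      using lss[OF IL JI] by blast
    obtain i e where ie: "1 = i + e" "i \<in> I" "e \<in> I'" using I'(3) unfolding set_plus_def by blast
    define K2 where "K2 = {k + r * (e * m) | k r. k \<in> K}"
    have K2L: "left_ideal K2" unfolding K2_def by (rule ext_left[OF K(1)])
    have KK2: "K \<subseteq> K2" unfolding K2_def by (force intro: exI[of _ 0])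
    have emB: "e * m \<in> B" using li_mult[OF B m] .
    have K2B: "K2 \<subseteq> B" unfolding K2_def using K(3) li_mult[OF B emB] li_add[OF B] by blast
    have "N \<inter> K2 \<subseteq> A"
    proof
      fix z assume "z \<in> N \<inter> K2"
      then obtain k r where z: "z \<in> N" "z = k + r * (e * m)" "k \<in> K" unfolding K2_def by blast
      have "(r * e) * m = z - k" using z(2) by (simp add: mult.assoc)
      moreover have "z - k \<in> NK" using li_diff[OF NKL] NNK KNK z(1,3) by blast
      ultimately have "(r * e) * m \<in> NK" by simp
      then have "r * e \<in> I" unfolding I_def by simp
      moreover have "r * e \<in> I'" using li_mult[OF I'(1) ie(3)] .
      ultimately have "r * e \<in> J" using I'(4) by blast
      then have "(r * e) * m \<in> K" using ann[OF _ m] K(2) by blast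
      then have "z \<in> K" using z(2,3) li_add[OF K(1)] by (simp add: mult.assoc)
      then show "z \<in> A" using z(1) K(4) by blast
    qed
    then have "N \<inter> K2 = A" using N(2) K(2) KK2 by blast
    then have "K2 \<in> S" unfolding S_def using K2L K(2) KK2 K2B by blast
    then have "K2 = K" using Kmax KK2 by blast
    moreover have "e * m \<in> K2" unfolding K2_def using li_0[OF K(1)] by (force intro: exI[of _ 1])
    ultimately have "e \<in> I" unfolding I_def using KNK by (auto simp: mult.assoc)
    then have "1 \<in> I" using ie li_add[OF IL] by metis
    then show "m \<in> NK" unfolding I_def by simp
  qed
  then have "set_plus N K = B" using NKB unfolding NK_def by blast
  then show "\<exists>K'. left_ideal K' \<and> A \<subseteq> K' \<and> K' \<subseteq> B \<and> set_plus N K' = B \<and> N \<inter> K' = A"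
    using K by blast
qed

lemma factB_right:
  assumes rss: "\<And>I. right_ideal I \<Longrightarrow> J \<subseteq> I \<Longrightarrow> \<exists>I'. right_ideal I' \<and> J \<subseteq> I' \<and> 1 \<in> set_plus I I' \<and> I \<inter> I' \<subseteq> J"
    and A: "right_ideal A" and B: "right_ideal B" and AB: "A \<subseteq> B"
    and ann: "\<And>j b. j \<in> J \<Longrightarrow> b \<in> B \<Longrightarrow> b * j \<in> A"
  shows "ss_subquot right_ideal A B"
  unfolding ss_subquot_def
proof (intro conjI allI impI)
  show "A \<subseteq> B" by fact
  fix N assume "right_ideal N \<and> A \<subseteq> N \<and> N \<subseteq> B"
  then have N: "right_ideal N" "A \<subseteq> N" "N \<subseteq> B" by auto
  define S where "S = {K. right_ideal K \<and> A \<subseteq> K \<and> K \<subseteq> B \<and> N \<inter> K = A}"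
  have "\<exists>M\<in>S. \<forall>X\<in>S. M \<subseteq> X \<longrightarrow> X = M"
  proof (rule subset_Zorn_nonempty)
    show "S \<noteq> {}" using A AB N(2) unfolding S_def by blast
  next
    fix C assume C: "C \<noteq> {}" "subset.chain S C"
    then have CS: "C \<subseteq> S" and Cc: "\<And>X Y. X \<in> C \<Longrightarrow> Y \<in> C \<Longrightarrow> X \<subseteq> Y \<or> Y \<subseteq> X"
      by (auto simp: subset_chain_def)
    have "right_ideal (\<Union>C)" using chain_right[OF C(1) _ Cc] CS unfolding S_def by blast
    then show "\<Union>C \<in> S" using CS C(1) unfolding S_def by blast
  qed
  then obtain K where KS: "K \<in> S" and Kmax: "\<And>X. X \<in> S \<Longrightarrow> K \<subseteq> X \<Longrightarrow> X = K" by blast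
  have K: "right_ideal K" "A \<subseteq> K" "K \<subseteq> B" "N \<inter> K = A" using KS unfolding S_def by auto
  define NK where "NK = set_plus N K"
  have NKL: "right_ideal NK" unfolding NK_def by (rule splus_right[OF N(1) K(1)])
  have KNK: "K \<subseteq> NK" unfolding NK_def set_plus_def using ri_0[OF N(1)] by force
  have NNK: "N \<subseteq> NK" unfolding NK_def set_plus_def using ri_0[OF K(1)] by force
  have NKB: "NK \<subseteq> B" unfolding NK_def set_plus_def using N(3) K(3) ri_add[OF B] by blast
  have "B \<subseteq> NK"
  proof
    fix m assume m: "m \<in> B"
    define I where "I = {r. m * r \<in> NK}"
    have IL: "right_ideal I" unfolding right_ideal_def I_def
      using ri_0[OF NKL] ri_diff[OF NKL] ri_mult[OF NKL] by (auto simp: right_diff_distrib mult.assoc[symmetric])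
    have JI: "J \<subseteq> I" unfolding I_def using ann[OF _ m] K(2) KNK by blast
    obtain I' where I': "right_ideal I'" "J \<subseteq> I'" "1 \<in> set_plus I I'" "I \<inter> I' \<subseteq> J"
      using rss[OF IL JI] by blast
    obtain i e where ie: "1 = i + e" "i \<in> I" "e \<in> I'" using I'(3) unfolding set_plus_def by blast
    define K2 where "K2 = {k + (m * e) * r | k r. k \<in> K}"
    have K2L: "right_ideal K2" unfolding K2_def by (rule ext_right[OF K(1)])
    have KK2: "K \<subseteq> K2" unfolding K2_def by (force intro: exI[of _ 0])
    have emB: "m * e \<in> B" using ri_mult[OF B m] .
    have K2B: "K2 \<subseteq> B" unfolding K2_def using K(3) ri_mult[OF B emB] ri_add[OF B] by blast
    have "N \<inter> K2 \<subseteq> A"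
    proof
      fix z assume "z \<in> N \<inter> K2"
      then obtain k r where z: "z \<in> N" "z = k + (m * e) * r" "k \<in> K" unfolding K2_def by blast
      have "m * (e * r) = z - k" using z(2) by (simp add: mult.assoc)
      moreover have "z - k \<in> NK" using ri_diff[OF NKL] NNK KNK z(1,3) by blast
      ultimately have "m * (e * r) \<in> NK" by simp
      then have "e * r \<in> I" unfolding I_def by simp
      moreover have "e * r \<in> I'" using ri_mult[OF I'(1) ie(3)] .
      ultimately have "e * r \<in> J" using I'(4) by blast
      then have "m * (e * r) \<in> K" using ann[OF _ m] K(2) by blast
      then have "z \<in> K" using z(2,3) ri_add[OF K(1)] by (simp add: mult.assoc)
      then show "z \<in> A" using z(1) K(4) by blast
    qed
    then have "N \<inter> K2 = A" using N(2) K(2) KK2 by blast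
    then have "K2 \<in> S" unfolding S_def using K2L K(2) KK2 K2B by blast
    then have "K2 = K" using Kmax KK2 by blast
    moreover have "m * e \<in> K2" unfolding K2_def using ri_0[OF K(1)] by (force intro: exI[of _ 1])
    ultimately have "e \<in> I" unfolding I_def using KNK by auto
    then have "1 \<in> I" using ie ri_add[OF IL] by metis
    then show "m \<in> NK" unfolding I_def by simp
  qed
  then have "set_plus N K = B" using NKB unfolding NK_def by blast
  then show "\<exists>K'. right_ideal K' \<and> A \<subseteq> K' \<and> K' \<subseteq> B \<and> set_plus N K' = B \<and> N \<inter> K' = A"
    using K by blast
qed

section \<open>Left-right symmetry of semisimplicity modulo J\<close>

lemma lss_from:
  assumes ss: "ss_subquot left_ideal J UNIV" and I: "left_ideal I" and JI: "J \<subseteq> I"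
  shows "\<exists>I'. left_ideal I' \<and> J \<subseteq> I' \<and> 1 \<in> set_plus I I' \<and> I \<inter> I' \<subseteq> J"
proof -
  have "left_ideal I \<and> J \<subseteq> I \<and> I \<subseteq> UNIV" using I JI by simp
  then obtain K' where "left_ideal K'" "J \<subseteq> K'" "set_plus I K' = UNIV" "I \<inter> K' = J"
    using ss unfolding ss_subquot_def by blast
  then show ?thesis by (intro exI[of _ K']) auto
qed

lemma lgen_from:
  assumes ss: "ss_subquot left_ideal J UNIV" and I: "left_ideal I" and JI: "J \<subseteq> I"
  shows "\<exists>e\<in>I. \<forall>a\<in>I. a - a * e \<in> J"
proof -
  obtain I' where I': "left_ideal I'" "J \<subseteq> I'" "1 \<in> set_plus I I'" "I \<inter> I' \<subseteq> J"
    using lss_from[OF ss I JI] by blast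
  obtain e e' where ee: "1 = e + e'" "e \<in> I" "e' \<in> I'" using I'(3) unfolding set_plus_def by blast
  have "a - a * e \<in> J" if a: "a \<in> I" for a
  proof -
    have "a = a * (e + e')" using ee(1) by simp
    then have "a = a * e + a * e'" by (simp add: distrib_left)
    then have "a - a * e = a * e'" by (simp add: algebra_simps)
    moreover have "a - a * e \<in> I" using li_diff[OF I a li_mult[OF I ee(2)]] .
    moreover have "a * e' \<in> I'" using li_mult[OF I'(1) ee(3)] .
    ultimately show ?thesis using I'(4) by auto
  qed
  then show ?thesis using ee(2) by blast
qed

lemma rss_lemma:
  assumes JL: "left_ideal J" and JR: "right_ideal J"
    and lgen: "\<And>I. left_ideal I \<Longrightarrow> J \<subseteq> I \<Longrightarrow> \<exists>e\<in>I. \<forall>a\<in>I. a - a * e \<in> J"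
    and I: "right_ideal I" and JI: "J \<subseteq> I"
  shows "\<exists>I'. right_ideal I' \<and> J \<subseteq> I' \<and> 1 \<in> set_plus I I' \<and> I \<inter> I' \<subseteq> J"
proof -
  note jl = li_mult[OF JL] and jr = ri_mult[OF JR] and jadd = li_add[OF JL] and jdiff = li_diff[OF JL]
    and jneg = li_uminus[OF JL] and j0 = li_0[OF JL]
  define Lf where "Lf f = {k + r * f | k r. k \<in> J}" for f
  have LfL: "left_ideal (Lf f)" for f unfolding Lf_def by (rule ext_left[OF JL])
  have JLf: "J \<subseteq> Lf f" for f unfolding Lf_def by (force intro: exI[of _ 0])
  have fLf: "f \<in> Lf f" for f unfolding Lf_def using j0 by (force intro: exI[of _ 1])
  define F where "F = {Lf f | f. f \<in> I \<and> f * f - f \<in> J}"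
  have "\<exists>M\<in>F. \<forall>X\<in>F. M \<subseteq> X \<longrightarrow> X = M"
  proof (rule Zorn_Lemma2, intro ballI)
    fix C assume "C \<in> chains F"
    then have CF: "C \<subseteq> F" and Cc: "\<And>X Y. X \<in> C \<Longrightarrow> Y \<in> C \<Longrightarrow> X \<subseteq> Y \<or> Y \<subseteq> X"
      unfolding chains_def chain_subset_def by auto
    show "\<exists>U\<in>F. \<forall>X\<in>C. X \<subseteq> U"
    proof (cases "C = {}")
      case True
      have "Lf 0 \<in> F" unfolding F_def using ri_0[OF I] j0 by force
      then show ?thesis using True by blast
    next
      case False
      have CL: "K \<in> C \<Longrightarrow> left_ideal K" for K using CF LfL unfolding F_def by blast
      have UL: "left_ideal (\<Union>C)" by (rule chain_left[OF False CL Cc])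
      have JU: "J \<subseteq> \<Union>C" using False CF JLf unfolding F_def by blast
      obtain e where eU: "e \<in> \<Union>C" and e: "\<forall>u\<in>\<Union>C. u - u * e \<in> J" using lgen[OF UL JU] by blast
      then obtain X0 where X0: "X0 \<in> C" "e \<in> X0" by blast
      then obtain f0 where f0: "X0 = Lf f0" "f0 \<in> I \<and> f0 * f0 - f0 \<in> J" using CF unfolding F_def by blast
      obtain j0' y where ey: "e = j0' + y * f0" "j0' \<in> J" using X0(2) f0(1) unfolding Lf_def by blast
      have "u \<in> Lf f0" if u: "u \<in> \<Union>C" for u
      proof -
        have "u = ((u - u * e) + u * j0') + (u * y) * f0" using ey(1) by (simp add: algebra_simps)
        moreover have "(u - u * e) + u * j0' \<in> J" using e u jadd jl ey(2) by blast
        ultimately show ?thesis unfolding Lf_def by blast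
      qed
      then show ?thesis using X0 f0 CF by blast
    qed
  qed
  then obtain M where MF: "M \<in> F" and Mmax: "\<And>X. X \<in> F \<Longrightarrow> M \<subseteq> X \<Longrightarrow> X = M" by blast
  then obtain f where Mf: "M = Lf f" and fI: "f \<in> I" and ff: "f * f - f \<in> J" unfolding F_def by blast
  have key: "a - f * a \<in> J" if a: "a \<in> I" for a
  proof -
    define b where "b = a - f * a"
    have bI: "b \<in> I" unfolding b_def using ri_diff[OF I a ri_mult[OF I fI]] .
    obtain e' where e'L: "e' \<in> Lf b" and e': "\<forall>u\<in>Lf b. u - u * e' \<in> J" using lgen[OF LfL JLf] by blast
    obtain j1 y where j1: "e' = j1 + y * b" "j1 \<in> J" using e'L unfolding Lf_def by blast
    have "b - b * e' \<in> J" using e' fLf by blast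
    moreover have "b - b * y * b = (b - b * e') + b * j1" using j1(1) by (simp add: algebra_simps)
    ultimately have byb: "b - b * y * b \<in> J" using jadd[OF _ jl[OF j1(2)]] by metis
    define g where "g = b * y"
    have gI: "g \<in> I" unfolding g_def using ri_mult[OF I bI] .
    have gg: "g * g - g \<in> J"
    proof -
      have "g * g - g = - ((b - b * y * b) * y)" by (simp add: g_def algebra_simps)
      then show ?thesis using jneg[OF jr[OF byb]] by simp
    qed
    have fg: "f * g \<in> J"
    proof -
      have "f * g = - (((f * f - f) * a) * y)" by (simp add: g_def b_def algebra_simps)
      then show ?thesis using jneg[OF jr[OF jr[OF ff]]] by simp
    qed
    define h where "h = f + g - g * f"
    have hI: "h \<in> I" unfolding h_def using ri_diff[OF I ri_add[OF I fI gI] ri_mult[OF I gI]] .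
    have hh: "h * h - h \<in> J"
    proof -
      have "h * h - h = (f*f - f) + f*g - (f*g)*f + (g*g - g) - (g*g - g)*f - g*(f*f - f) - g*(f*g) + g*(f*g)*f"
        by (simp add: h_def algebra_simps)
      moreover have "(f*f - f) + f*g - (f*g)*f + (g*g - g) - (g*g - g)*f - g*(f*f - f) - g*(f*g) + g*(f*g)*f \<in> J"
        by (intro jadd jdiff ff fg gg jr jl)
      ultimately show ?thesis by simp
    qed
    have fh: "f * h - f \<in> J"
    proof -
      have eq: "f * h - f = (f*f - f) + f*g - (f*g)*f" by (simp add: h_def algebra_simps)
      have "(f*f - f) + f*g - (f*g)*f \<in> J" by (intro jadd jdiff ff fg jr)
      then show ?thesis by (subst eq)
    qed
    have "Lf f \<subseteq> Lf h"
    proof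
      fix x assume "x \<in> Lf f"
      then obtain k r where x: "x = k + r * f" "k \<in> J" unfolding Lf_def by blast
      have "x = (k - r * (f * h - f)) + (r * f) * h" using x(1) by (simp add: algebra_simps)
      moreover have "k - r * (f * h - f) \<in> J" using jdiff jl x(2) fh by blast
      ultimately show "x \<in> Lf h" unfolding Lf_def by blast
    qed
    moreover have "Lf h \<in> F" unfolding F_def using hI hh by blast
    ultimately have "Lf h = Lf f" using Mmax Mf by blast
    then have "h \<in> Lf f" using fLf by metis
    then obtain j2 z where hz: "h = j2 + z * f" "j2 \<in> J" unfolding Lf_def by blast
    have hg: "h * g \<in> J"
    proof -
      have "h * g = j2 * g + z * (f * g)" using hz(1) by (simp add: algebra_simps)
      moreover have "j2 * g + z * (f * g) \<in> J" by (intro jadd jl jr hz(2) fg)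
      ultimately show ?thesis by simp
    qed
    have hgg: "h * g - g \<in> J"
    proof -
      have eq: "h * g - g = f * g + (g * g - g) - g * (f * g)" by (simp add: h_def algebra_simps)
      have "f * g + (g * g - g) - g * (f * g) \<in> J" by (intro jadd jdiff jl fg gg)
      then show ?thesis by (subst eq)
    qed
    have gJ: "g \<in> J" using jdiff[OF hg hgg] by simp
    have "b = (b - b * y * b) + g * b" by (simp add: g_def)
    moreover have "(b - b * y * b) + g * b \<in> J" by (intro jadd byb jr gJ)
    ultimately have "b \<in> J" by simp
    then show ?thesis unfolding b_def .
  qed
  define I' where "I' = {x. f * x \<in> J}"
  have I'R: "right_ideal I'" unfolding right_ideal_def I'_def
    using j0 jdiff jr by (auto simp: right_diff_distrib mult.assoc[symmetric])
  have JI': "J \<subseteq> I'" unfolding I'_def using jl by blast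
  have eq: "f * (1 - f) = - (f * f - f)" by (simp add: algebra_simps)
  have "f * (1 - f) \<in> J" using jneg[OF ff] by (subst eq)
  then have "1 - f \<in> I'" unfolding I'_def by simp
  then have "1 \<in> set_plus I I'" unfolding set_plus_def using fI by (force intro: exI[of _ f])
  moreover have "I \<inter> I' \<subseteq> J"
  proof
    fix a assume "a \<in> I \<inter> I'"
    then have "a - f * a \<in> J" "f * a \<in> J" using key unfolding I'_def by auto
    then show "a \<in> J" using jadd by fastforce
  qed
  ultimately show ?thesis using I'R JI' by blast
qed

section \<open>Filtrations\<close>

definition Sl :: "'a::ring_1 set \<Rightarrow> nat \<Rightarrow> 'a set" where
  "Sl J k = {x. \<forall>j\<in>set_pow J k. j * x = 0}"

definition Sr :: "'a::ring_1 set \<Rightarrow> nat \<Rightarrow> 'a set" where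
  "Sr J k = {x. \<forall>j\<in>set_pow J k. x * j = 0}"

lemma ssf_intro:
  assumes "G 0 = {0}" "G m = UNIV" "\<And>k. k \<le> m \<Longrightarrow> P (G k)"
    "\<And>k. k < m \<Longrightarrow> G k \<subseteq> G (Suc k)" "\<And>k. k < m \<Longrightarrow> ss_subquot P (G k) (G (Suc k))"
  shows "ss_filtration P (map G [0..<Suc m])"
  unfolding ss_filtration_def
proof (intro conjI allI impI ballI)
  show "hd (map G [0..<Suc m]) = {0}" using assms(1) by (simp add: hd_map del: upt_Suc)
  show "last (map G [0..<Suc m]) = UNIV" using assms(2) by (simp add: last_map del: upt_Suc)
  fix X assume "X \<in> set (map G [0..<Suc m])" then show "P X" using assms(3) by auto
next
  fix k assume "Suc k < length (map G [0..<Suc m])"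
  then have k: "k < m" by simp
  have e: "map G [0..<Suc m] ! k = G k" "map G [0..<Suc m] ! Suc k = G (Suc k)"
    using k by (simp_all del: upt_Suc)
  show "map G [0..<Suc m] ! k \<subseteq> map G [0..<Suc m] ! Suc k" using assms(4)[OF k] e by simp
  show "ss_subquot P (map G [0..<Suc m] ! k) (map G [0..<Suc m] ! Suc k)" using assms(5)[OF k] e by simp
qed (simp del: upt_Suc)

context
  fixes J :: "'a::ring_1 set" and l n :: nat
  assumes JL: "left_ideal J" and JR: "right_ideal J" and Pl: "set_pow J l = {0}"
    and lmin: "\<And>m. set_pow J m = {0} \<Longrightarrow> l \<le> m"
    and lss: "\<And>I. left_ideal I \<Longrightarrow> J \<subseteq> I \<Longrightarrow> \<exists>I'. left_ideal I' \<and> J \<subseteq> I' \<and> 1 \<in> set_plus I I' \<and> I \<inter> I' \<subseteq> J"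
    and rss: "\<And>I. right_ideal I \<Longrightarrow> J \<subseteq> I \<Longrightarrow> \<exists>I'. right_ideal I' \<and> J \<subseteq> I' \<and> 1 \<in> set_plus I I' \<and> I \<inter> I' \<subseteq> J"
begin

lemma ssf_nth_left:
  assumes F: "ss_filtration left_ideal Fs" and k: "Suc k < length Fs"
  shows "left_ideal (Fs ! k)" "left_ideal (Fs ! Suc k)" "ss_subquot left_ideal (Fs ! k) (Fs ! Suc k)"
  using F k unfolding ss_filtration_def by (auto simp: nth_mem)

lemma ssf_nth_right:
  assumes F: "ss_filtration right_ideal Fs" and k: "Suc k < length Fs"
  shows "right_ideal (Fs ! k)" "right_ideal (Fs ! Suc k)" "ss_subquot right_ideal (Fs ! k) (Fs ! Suc k)"
  using F k unfolding ss_filtration_def by (auto simp: nth_mem)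

lemma ssf_last: "ss_filtration P Fs \<Longrightarrow> length Fs = Suc m \<Longrightarrow> Fs ! m = UNIV"
  unfolding ss_filtration_def by (metis diff_Suc_1 last_conv_nth)

lemma ssf_hd: "ss_filtration P Fs \<Longrightarrow> Fs ! 0 = {0}"
  unfolding ss_filtration_def by (metis hd_conv_nth)

lemma lower_left:
  assumes F: "ss_filtration left_ideal Fs" and len: "length Fs = Suc m"
  shows "k \<le> m \<Longrightarrow> set_pow J k \<subseteq> Fs ! (m - k)"
proof (induction k)
  case 0 then show ?case using ssf_last[OF F len] by simp
next
  case (Suc k)
  have i: "Suc (m - Suc k) < length Fs" using Suc.prems len by simp
  have e: "Suc (m - Suc k) = m - k" using Suc.prems by simp
  note nl = ssf_nth_left[OF F i]
  have "set_mult J (set_pow J k) \<subseteq> Fs ! (m - Suc k)"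
  proof (rule sm_subset)
    fix j x assume "j \<in> J" "x \<in> set_pow J k"
    then have "x \<in> Fs ! Suc (m - Suc k)" using Suc e by auto
    then show "j * x \<in> Fs ! (m - Suc k)" using factA_left[OF JL JR Pl nl(1,2,3) \<open>j \<in> J\<close>] by blast
  qed (auto simp: li_0[OF nl(1)] li_diff[OF nl(1)])
  then show ?case by simp
qed

lemma lower_right:
  assumes F: "ss_filtration right_ideal Fs" and len: "length Fs = Suc m"
  shows "k \<le> m \<Longrightarrow> set_pow J k \<subseteq> Fs ! (m - k)"
proof (induction k)
  case 0 then show ?case using ssf_last[OF F len] by simp
next
  case (Suc k)
  have i: "Suc (m - Suc k) < length Fs" using Suc.prems len by simp
  have e: "Suc (m - Suc k) = m - k" using Suc.prems by simp
  note nl = ssf_nth_right[OF F i]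
  have "set_mult (set_pow J k) J \<subseteq> Fs ! (m - Suc k)"
  proof (rule sm_subset)
    fix x j assume "j \<in> J" "x \<in> set_pow J k"
    then have "x \<in> Fs ! Suc (m - Suc k)" using Suc e by auto
    then show "x * j \<in> Fs ! (m - Suc k)" using factA_right[OF JL JR Pl nl(1,2,3) \<open>j \<in> J\<close>] by blast
  qed (auto simp: ri_0[OF nl(1)] ri_diff[OF nl(1)])
  then show ?case using sp_Suc_alt[OF JL JR, of k] by blast
qed

lemma len_left: "ss_filtration left_ideal (Fs :: 'a set list) \<Longrightarrow> Suc l \<le> length Fs"
proof -
  assume F: "ss_filtration left_ideal Fs"
  then obtain m where len: "length Fs = Suc m" unfolding ss_filtration_def by (cases Fs) auto
  have "set_pow J m \<subseteq> {0}" using lower_left[OF F len, of m] ssf_hd[OF F] by simp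
  then have "set_pow J m = {0}" using sp_0[of J m] by blast
  then show ?thesis using lmin len by simp
qed

lemma len_right: "ss_filtration right_ideal (Fs :: 'a set list) \<Longrightarrow> Suc l \<le> length Fs"
proof -
  assume F: "ss_filtration right_ideal Fs"
  then obtain m where len: "length Fs = Suc m" unfolding ss_filtration_def by (cases Fs) auto
  have "set_pow J m \<subseteq> {0}" using lower_right[OF F len, of m] ssf_hd[OF F] by simp
  then have "set_pow J m = {0}" using sp_0[of J m] by blast
  then show ?thesis using lmin len by simp
qed

lemma upper_left:
  assumes F: "ss_filtration left_ideal (Fs :: 'a set list)" and len: "length Fs = Suc m"
  shows "k \<le> m \<Longrightarrow> Fs ! k \<subseteq> Sl J k"
proof (induction k)
  case 0 then show ?case using ssf_hd[OF F] by (auto simp: Sl_def)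
next
  case (Suc k)
  have i: "Suc k < length Fs" using Suc.prems len by simp
  note nl = ssf_nth_left[OF F i]
  show ?case
  proof
    fix x assume x: "x \<in> Fs ! Suc k"
    have "p * x = 0" if p: "p \<in> set_pow J (Suc k)" for p
    proof -
      from p have "p \<in> set_mult (set_pow J k) J" using sp_Suc_alt[OF JL JR, of k] by blast
      then show ?thesis
      proof (induction rule: set_mult.induct)
        case (prod q j)
        have "j * x \<in> Fs ! k" using factA_left[OF JL JR Pl nl(1,2,3) prod(2) x] .
        then have "j * x \<in> Sl J k" using Suc.IH Suc.prems by auto
        then show ?case using prod(1) unfolding Sl_def by (simp add: mult.assoc)
      next
        case zero then show ?case by simp
      next
        case (diff a b) then show ?case by (simp add: left_diff_distrib)
      qed
    qed
    then show "x \<in> Sl J (Suc k)" unfolding Sl_def by blast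
  qed
qed

lemma upper_right:
  assumes F: "ss_filtration right_ideal (Fs :: 'a set list)" and len: "length Fs = Suc m"
  shows "k \<le> m \<Longrightarrow> Fs ! k \<subseteq> Sr J k"
proof (induction k)
  case 0 then show ?case using ssf_hd[OF F] by (auto simp: Sr_def)
next
  case (Suc k)
  have i: "Suc k < length Fs" using Suc.prems len by simp
  note nl = ssf_nth_right[OF F i]
  show ?case
  proof
    fix x assume x: "x \<in> Fs ! Suc k"
    have "x * p = 0" if p: "p \<in> set_pow J (Suc k)" for p
    proof -
      from p have "p \<in> set_mult J (set_pow J k)" by simp
      then show ?thesis
      proof (induction rule: set_mult.induct)
        case (prod j q)
        have "x * j \<in> Fs ! k" using factA_right[OF JL JR Pl nl(1,2,3) prod(1) x] .
        then have "x * j \<in> Sr J k" using Suc.IH Suc.prems by auto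
        then show ?case using prod(2) unfolding Sr_def by (simp add: mult.assoc[symmetric])
      next
        case zero then show ?case by simp
      next
        case (diff a b) then show ?case by (simp add: right_diff_distrib)
      qed
    qed
    then show "x \<in> Sr J (Suc k)" unfolding Sr_def by blast
  qed
qed

lemma l_pos: "1 \<le> l"
proof (rule ccontr)
  assume "\<not> 1 \<le> l" then have "l = 0" by simp
  then have "(UNIV :: 'a set) = {0}" using Pl by simp
  then show False by (metis UNIV_I singletonD zero_neq_one)
qed

lemma Sl_left: "left_ideal (Sl J k)"
  unfolding left_ideal_def Sl_def
  using ri_mult[OF sp_right[of J k]] by (auto simp: right_diff_distrib mult.assoc[symmetric])

lemma Sr_right: "right_ideal (Sr J k)"
  unfolding right_ideal_def Sr_def
  using li_mult[OF sp_left[OF JL, of k]] by (auto simp: left_diff_distrib mult.assoc)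

lemma rad_left: "ss_filtration left_ideal (map (\<lambda>k. set_pow J (l - k)) [0..<Suc l])"
proof (rule ssf_intro)
  show "set_pow J (l - 0) = {0}" using Pl by simp
  show "set_pow J (l - l) = UNIV" by simp
  show "left_ideal (set_pow J (l - k))" for k using sp_left[OF JL] .
  show "set_pow J (l - k) \<subseteq> set_pow J (l - Suc k)" for k by (rule sp_anti) simp
  fix k assume k: "k < l"
  show "ss_subquot left_ideal (set_pow J (l - k)) (set_pow J (l - Suc k))"
  proof (rule factB_left[OF lss sp_left[OF JL] sp_left[OF JL]])
    show "set_pow J (l - k) \<subseteq> set_pow J (l - Suc k)" by (rule sp_anti) simp
    fix j b assume "j \<in> J" "b \<in> set_pow J (l - Suc k)"
    then have "j * b \<in> set_pow J (Suc (l - Suc k))" by (rule sp_Suc_in)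
    then show "j * b \<in> set_pow J (l - k)" using k by (simp add: Suc_diff_Suc)
  qed
qed

lemma rad_right: "ss_filtration right_ideal (map (\<lambda>k. set_pow J (l - k)) [0..<Suc l])"
proof (rule ssf_intro)
  show "set_pow J (l - 0) = {0}" using Pl by simp
  show "set_pow J (l - l) = UNIV" by simp
  show "right_ideal (set_pow J (l - k))" for k using sp_right .
  show "set_pow J (l - k) \<subseteq> set_pow J (l - Suc k)" for k by (rule sp_anti) simp
  fix k assume k: "k < l"
  show "ss_subquot right_ideal (set_pow J (l - k)) (set_pow J (l - Suc k))"
  proof (rule factB_right[OF rss sp_right sp_right])
    show "set_pow J (l - k) \<subseteq> set_pow J (l - Suc k)" by (rule sp_anti) simp
    fix j b assume "j \<in> J" "b \<in> set_pow J (l - Suc k)"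
    then have "b * j \<in> set_pow J (Suc (l - Suc k))" using sp_Suc_right[OF JL] by blast
    then show "b * j \<in> set_pow J (l - k)" using k by (simp add: Suc_diff_Suc)
  qed
qed

lemma soc_left: "ss_filtration left_ideal (map (Sl J) [0..<Suc l])"
proof (rule ssf_intro)
  show "Sl J 0 = {0}" unfolding Sl_def by auto (metis mult_1_left)
  show "Sl J l = UNIV" unfolding Sl_def using Pl by auto
  show "left_ideal (Sl J k)" for k by (rule Sl_left)
  show "Sl J k \<subseteq> Sl J (Suc k)" for k unfolding Sl_def using sp_Suc_sub[of J k] by blast
  fix k assume k: "k < l"
  show "ss_subquot left_ideal (Sl J k) (Sl J (Suc k))"
  proof (rule factB_left[OF lss Sl_left Sl_left])
    show "Sl J k \<subseteq> Sl J (Suc k)" unfolding Sl_def using sp_Suc_sub[of J k] by blast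
    fix j b assume j: "j \<in> J" and b: "b \<in> Sl J (Suc k)"
    have "q * (j * b) = 0" if q: "q \<in> set_pow J k" for q
    proof -
      have "q * j \<in> set_pow J (Suc k)" using sp_Suc_right[OF JL q j] .
      then show ?thesis using b unfolding Sl_def by (simp add: mult.assoc[symmetric])
    qed
    then show "j * b \<in> Sl J k" unfolding Sl_def by blast
  qed
qed

lemma soc_right: "ss_filtration right_ideal (map (Sr J) [0..<Suc l])"
proof (rule ssf_intro)
  show "Sr J 0 = {0}" unfolding Sr_def by auto (metis mult_1_right)
  show "Sr J l = UNIV" unfolding Sr_def using Pl by auto
  show "right_ideal (Sr J k)" for k by (rule Sr_right)
  show "Sr J k \<subseteq> Sr J (Suc k)" for k unfolding Sr_def using sp_Suc_sub[of J k] by blast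
  fix k assume k: "k < l"
  show "ss_subquot right_ideal (Sr J k) (Sr J (Suc k))"
  proof (rule factB_right[OF rss Sr_right Sr_right])
    show "Sr J k \<subseteq> Sr J (Suc k)" unfolding Sr_def using sp_Suc_sub[of J k] by blast
    fix j b assume j: "j \<in> J" and b: "b \<in> Sr J (Suc k)"
    have "(b * j) * q = 0" if q: "q \<in> set_pow J k" for q
    proof -
      have "j * q \<in> set_pow J (Suc k)" using sp_Suc_in[OF j q] .
      then show ?thesis using b unfolding Sr_def by (simp add: mult.assoc)
    qed
    then show "b * j \<in> Sr J k" unfolding Sr_def by blast
  qed
qed

lemma loewy_left: "loewy_filtration left_ideal (Fs :: 'a set list) \<longleftrightarrow> ss_filtration left_ideal Fs \<and> length Fs = Suc l"
proof
  assume F: "loewy_filtration left_ideal Fs"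
  then have "length Fs \<le> length (map (\<lambda>k. set_pow J (l - k)) [0..<Suc l])"
    using rad_left unfolding loewy_filtration_def by blast
  then have "length Fs \<le> Suc l" by simp
  moreover have "ss_filtration left_ideal Fs" using F unfolding loewy_filtration_def by blast
  ultimately show "ss_filtration left_ideal Fs \<and> length Fs = Suc l" using len_left by (meson le_antisym)
next
  assume "ss_filtration left_ideal Fs \<and> length Fs = Suc l"
  then show "loewy_filtration left_ideal Fs" unfolding loewy_filtration_def using len_left by auto
qed

lemma loewy_right: "loewy_filtration right_ideal (Fs :: 'a set list) \<longleftrightarrow> ss_filtration right_ideal Fs \<and> length Fs = Suc l"
proof
  assume F: "loewy_filtration right_ideal Fs"
  then have "length Fs \<le> length (map (\<lambda>k. set_pow J (l - k)) [0..<Suc l])"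
    using rad_right unfolding loewy_filtration_def by blast
  then have "length Fs \<le> Suc l" by simp
  moreover have "ss_filtration right_ideal Fs" using F unfolding loewy_filtration_def by blast
  ultimately show "ss_filtration right_ideal Fs \<and> length Fs = Suc l" using len_right by (meson le_antisym)
next
  assume "ss_filtration right_ideal Fs \<and> length Fs = Suc l"
  then show "loewy_filtration right_ideal Fs" unfolding loewy_filtration_def using len_right by auto
qed

lemma rigid_left_iff:
  "rigid_regular (left_ideal :: 'a set \<Rightarrow> bool) \<longleftrightarrow> (\<forall>i\<in>{1..l}. Sl J (l - i) = set_pow J i)"
proof
  assume r: "rigid_regular (left_ideal :: 'a set \<Rightarrow> bool)"
  have "loewy_filtration left_ideal (map (\<lambda>k. set_pow J (l - k)) [0..<Suc l])"
    using rad_left loewy_left by simp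
  moreover have "loewy_filtration left_ideal (map (Sl J) [0..<Suc l])"
    using soc_left loewy_left by simp
  ultimately have eq: "map (\<lambda>k. set_pow J (l - k)) [0..<Suc l] = map (Sl J) [0..<Suc l]"
    using r unfolding rigid_regular_def by blast
  show "\<forall>i\<in>{1..l}. Sl J (l - i) = set_pow J i"
  proof
    fix i assume i: "i \<in> {1..l}"
    have "map (\<lambda>k. set_pow J (l - k)) [0..<Suc l] ! (l - i) = map (Sl J) [0..<Suc l] ! (l - i)" using eq by (rule arg_cong)
    then show "Sl J (l - i) = set_pow J i" using i by (simp del: upt_Suc)
  qed
next
  assume H: "\<forall>i\<in>{1..l}. Sl J (l - i) = set_pow J i"
  define R where "R = map (\<lambda>k. set_pow J (l - k)) [0..<Suc l]"
  have RL: "loewy_filtration left_ideal R" unfolding R_def using rad_left loewy_left by simp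
  have "Fs = R" if F: "loewy_filtration left_ideal Fs" for Fs
  proof -
    have F1: "ss_filtration left_ideal Fs" and len: "length Fs = Suc l" using F loewy_left by auto
    show ?thesis
    proof (rule nth_equalityI)
      show "length Fs = length R" using len by (simp add: R_def)
      fix k assume "k < length Fs"
      then have k: "k \<le> l" using len by simp
      have Rk: "R ! k = set_pow J (l - k)" unfolding R_def using k by (simp del: upt_Suc)
      show "Fs ! k = R ! k"
      proof (cases "k = l")
        case True then show ?thesis using ssf_last[OF F1 len] Rk by simp
      next
        case False
        then have "l - k \<in> {1..l}" using k by auto
        then have "Sl J k = set_pow J (l - k)" using H k by (metis diff_diff_cancel)
        moreover have "set_pow J (l - k) \<subseteq> Fs ! k" using lower_left[OF F1 len, of "l - k"] k by simp
        moreover have "Fs ! k \<subseteq> Sl J k" using upper_left[OF F1 len k] .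
        ultimately show ?thesis using Rk by simp
      qed
    qed
  qed
  then show "rigid_regular (left_ideal :: 'a set \<Rightarrow> bool)" unfolding rigid_regular_def using RL by blast
qed

lemma rigid_right_iff:
  "rigid_regular (right_ideal :: 'a set \<Rightarrow> bool) \<longleftrightarrow> (\<forall>i\<in>{1..l}. Sr J (l - i) = set_pow J i)"
proof
  assume r: "rigid_regular (right_ideal :: 'a set \<Rightarrow> bool)"
  have "loewy_filtration right_ideal (map (\<lambda>k. set_pow J (l - k)) [0..<Suc l])"
    using rad_right loewy_right by simp
  moreover have "loewy_filtration right_ideal (map (Sr J) [0..<Suc l])"
    using soc_right loewy_right by simp
  ultimately have eq: "map (\<lambda>k. set_pow J (l - k)) [0..<Suc l] = map (Sr J) [0..<Suc l]"
    using r unfolding rigid_regular_def by blast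
  show "\<forall>i\<in>{1..l}. Sr J (l - i) = set_pow J i"
  proof
    fix i assume i: "i \<in> {1..l}"
    have "map (\<lambda>k. set_pow J (l - k)) [0..<Suc l] ! (l - i) = map (Sr J) [0..<Suc l] ! (l - i)" using eq by (rule arg_cong)
    then show "Sr J (l - i) = set_pow J i" using i by (simp del: upt_Suc)
  qed
next
  assume H: "\<forall>i\<in>{1..l}. Sr J (l - i) = set_pow J i"
  define R where "R = map (\<lambda>k. set_pow J (l - k)) [0..<Suc l]"
  have RL: "loewy_filtration right_ideal R" unfolding R_def using rad_right loewy_right by simp
  have "Fs = R" if F: "loewy_filtration right_ideal Fs" for Fs
  proof -
    have F1: "ss_filtration right_ideal Fs" and len: "length Fs = Suc l" using F loewy_right by auto
    show ?thesis
    proof (rule nth_equalityI)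
      show "length Fs = length R" using len by (simp add: R_def)
      fix k assume "k < length Fs"
      then have k: "k \<le> l" using len by simp
      have Rk: "R ! k = set_pow J (l - k)" unfolding R_def using k by (simp del: upt_Suc)
      show "Fs ! k = R ! k"
      proof (cases "k = l")
        case True then show ?thesis using ssf_last[OF F1 len] Rk by simp
      next
        case False
        then have "l - k \<in> {1..l}" using k by auto
        then have "Sr J k = set_pow J (l - k)" using H k by (metis diff_diff_cancel)
        moreover have "set_pow J (l - k) \<subseteq> Fs ! k" using lower_right[OF F1 len, of "l - k"] k by simp
        moreover have "Fs ! k \<subseteq> Sr J k" using upper_right[OF F1 len k] .
        ultimately show ?thesis using Rk by simp
      qed
    qed
  qed
  then show "rigid_regular (right_ideal :: 'a set \<Rightarrow> bool)" unfolding rigid_regular_def using RL by blast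
qed

end

theorem lemma1p1:
  fixes J :: "'a::ring_1 set" and l :: nat
  assumes "semiprimary TYPE('a)"
    and "J = jrad"
    and "l = loewy_length TYPE('a)"
  shows "rigid_ring TYPE('a) \<longleftrightarrow>
    (\<forall>i\<in>{1..l}. {x. \<forall>j\<in>set_pow J (l - i). j * x = 0} = set_pow J i \<and>
                  set_pow J i = {x. \<forall>j\<in>set_pow J (l - i). x * j = 0})"
proof -
  obtain n where nil: "set_pow J n = {0}" and ss: "ss_subquot left_ideal J UNIV"
    using assms(1,2) unfolding semiprimary_def by blast
  have JL: "left_ideal J" using jrad_left assms(2) by simp
  have JR: "right_ideal J" using jrad_right nil assms(2) by blast
  have Pl: "set_pow J l = {0}" unfolding assms(3) loewy_length_def assms(2)
    by (rule LeastI[of _ n]) (use nil assms(2) in simp)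
  have lmin: "\<And>m. set_pow J m = {0} \<Longrightarrow> l \<le> m" using assms(2,3) unfolding loewy_length_def by (simp add: Least_le)
  have lss: "\<And>I. left_ideal I \<Longrightarrow> J \<subseteq> I \<Longrightarrow> \<exists>I'. left_ideal I' \<and> J \<subseteq> I' \<and> 1 \<in> set_plus I I' \<and> I \<inter> I' \<subseteq> J"
    using lss_from[OF ss] by blast
  have rss: "\<And>I. right_ideal I \<Longrightarrow> J \<subseteq> I \<Longrightarrow> \<exists>I'. right_ideal I' \<and> J \<subseteq> I' \<and> 1 \<in> set_plus I I' \<and> I \<inter> I' \<subseteq> J"
    using rss_lemma[OF JL JR lgen_from[OF ss]] by blast
  note L = rigid_left_iff[OF JL JR Pl lmin lss rss] and R = rigid_right_iff[OF JL JR Pl lmin lss rss]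
  have e1: "\<And>k. {x. \<forall>j\<in>set_pow J k. j * x = 0} = Sl J k" by (simp add: Sl_def)
  have e2: "\<And>k. {x. \<forall>j\<in>set_pow J k. x * j = 0} = Sr J k" by (simp add: Sr_def)
  have e3: "(\<forall>i\<in>{1..l}. Sl J (l - i) = set_pow J i \<and> set_pow J i = Sr J (l - i)) \<longleftrightarrow>
     (\<forall>i\<in>{1..l}. Sl J (l - i) = set_pow J i) \<and> (\<forall>i\<in>{1..l}. Sr J (l - i) = set_pow J i)"
    by (metis (no_types))
  show ?thesis unfolding rigid_ring_def e1 e2 e3 using L R by (metis (no_types))
qed

end
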